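(* Let $\widehat{A}=A+\epsilon B$ and $\widehat{C}=C+\epsilon D$ with $A,B,C,D\in\mathbb{R}^{n\times n}$ be such that the dual group generalized inverses of $\widehat{A}$, $\widehat{C}$ and $\widehat{A}\widehat{C}$ exist and have the particular form $\widehat{A}^{\#}=A^{\#}-\epsilon A^{\#}BA^{\#}$, $\widehat{C}^{\#}=C^{\#}-\epsilon C^{\#}DC^{\#}$, $(\widehat{A}\widehat{C})^{\#}=(AC)^{\#}-\epsilon (AC)^{\#}(AD+BC)(AC)^{\#}$. If $AC=CA$, $C^{\#}B=BC^{\#}$ and $A^{\#}D=DA^{\#}$, then $(\widehat{A}\widehat{C})^{\#}=\widehat{A}^{\#}\widehat{C}^{\#}=\widehat{C}^{\#}\widehat{A}^{\#}$.
   Context: A dual number is $a+\epsilon b$ with $a,b\in\mathbb{R}$, where $\epsilon\neq 0$, $\epsilon^2=0$ and $\epsilon$ commutes with reals. A dual matrix is $A+\epsilon B$ with $A,B$ real; sums and products are computed formally using $\epsilon^2=0$ (so $(A+\epsilon B)(C+\epsilon D)=AC+\epsilon(AD+BC)$), and equality means equality of real and dual parts. For a real square matrix $A$, $A^{\#}$ denotes its group inverse. For a square dual matrix $\widehat{A}$ of dual index $1$ (i.e., $R(\widehat{A})=R(\widehat{A}^2)$ over dual vectors), its dual group generalized inverse (DGGI) $\widehat{A}^{\#}$ is the unique dual matrix $\widehat{X}$ (if it exists) with $\widehat{A}\widehat{X}\widehat{A}=\widehat{A}$, $\widehat{X}\widehat{A}\widehat{X}=\widehat{X}$, $\widehat{A}\widehat{X}=\widehat{X}\widehat{A}$.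 *)

theory Defs
  imports "HOL-Analysis.Analysis"
begin

text \<open>Real n x n matrices are represented as real^'n^'n.  A dual matrix
  A + eps B is represented by the pair (A, B): first component = real (standard)
  part, second component = dual part.\<close>

type_synonym 'n dmat = "(real^'n^'n) \<times> (real^'n^'n)"

definition dmult :: "'n::finite dmat \<Rightarrow> 'n dmat \<Rightarrow> 'n dmat" where
  "dmult P Q = (fst P ** fst Q, fst P ** snd Q + snd P ** fst Q)"

definition is_group_inverse :: "real^'n::finite^'n \<Rightarrow> real^'n^'n \<Rightarrow> bool" where
  "is_group_inverse A X \<longleftrightarrow> A ** X ** A = A \<and> X ** A ** X = X \<and> A ** X = X ** A"

definition has_group_inverse :: "real^'n::finite^'n \<Rightarrow> bool" where
  "has_group_inverse A \<longleftrightarrow> (\<exists>X. is_group_inverse A X)"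

definition group_inv :: "real^'n::finite^'n \<Rightarrow> real^'n^'n" where
  "group_inv A = (THE X. is_group_inverse A X)"

definition is_dggi :: "'n::finite dmat \<Rightarrow> 'n dmat \<Rightarrow> bool" where
  "is_dggi P X \<longleftrightarrow> dmult (dmult P X) P = P \<and> dmult (dmult X P) X = X \<and> dmult P X = dmult X P"

definition has_dggi :: "'n::finite dmat \<Rightarrow> bool" where
  "has_dggi P \<longleftrightarrow> (\<exists>X. is_dggi P X)"

definition dggi :: "'n::finite dmat \<Rightarrow> 'n dmat" where
  "dggi P = (THE X. is_dggi P X)"

end

theory Submission imports Defs begin
lemma cext: "(X::real^'n::finite^'n) ** A = A ** X \<Longrightarrow> Z ** X ** A = Z ** A ** X"
  by (metis matrix_mul_assoc)
lemma comm_gi: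
  assumes "is_group_inverse (A::real^'n::finite^'n) G" "X ** A = A ** X"
  shows "X ** G = G ** X"
proof -
  have a: "A ** G ** A = A" "G ** A ** G = G" "A ** G = G ** A"
    using assms(1) unfolding is_group_inverse_def by auto
  note x = assms(2) cext[OF assms(2)]
  have a1: "Z ** A ** G ** A = Z ** A" for Z using a by (metis matrix_mul_assoc)
  have g1: "G = G ** G ** A" using a by (metis matrix_mul_assoc)
  have g2: "G = A ** G ** G" using a by (metis matrix_mul_assoc)
  have "G ** X = G ** G ** A ** X" using g1 by (metis matrix_mul_assoc)
  also have "... = G ** G ** X ** A" using x by (metis matrix_mul_assoc)
  also have "... = G ** G ** X ** A ** G ** A" using a1 by metis
  also have "... = G ** G ** A ** X ** G ** A" using x by (metis matrix_mul_assoc)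
  also have "... = G ** X ** G ** A" using g1 by (metis matrix_mul_assoc)
  also have "... = G ** X ** A ** G" using a by (metis matrix_mul_assoc)
  also have "... = G ** A ** X ** G" using x by (metis matrix_mul_assoc)
  finally have l: "G ** X = G ** A ** X ** G" .
  have "X ** G = X ** A ** G ** G" using g2 by (metis matrix_mul_assoc)
  also have "... = A ** X ** G ** G" using x by (metis matrix_mul_assoc)
  also have "... = A ** G ** A ** X ** G ** G" using a by simp
  also have "... = A ** G ** X ** A ** G ** G" using x by (metis matrix_mul_assoc)
  also have "... = A ** G ** X ** G" using g2 by (metis matrix_mul_assoc)
  finally have r: "X ** G = A ** G ** X ** G" .
  show ?thesis using l r a by simp
qed
lemma mm_rneg: "(X::real^'n::finite^'n) ** (- Y) = - (X ** Y)"
  by (simp add: matrix_matrix_mult_def vec_eq_iff sum_negf)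

lemma mm_lneg: "(- X::real^'n::finite^'n) ** Y = - (X ** Y)"
  by (simp add: matrix_matrix_mult_def vec_eq_iff sum_negf)

lemma mm_rdistrib: "((X::real^'n::finite^'n) + Y) ** Z = X ** Z + Y ** Z"
  by (simp add: matrix_matrix_mult_def vec_eq_iff sum.distrib distrib_right)

lemma gi_unique:
  assumes "is_group_inverse (M::real^'n::finite^'n) X" "is_group_inverse M Y"
  shows "X = Y"
proof -
  have m1: "M ** X ** M = M" "X ** M ** X = X" "M ** X = X ** M"
    and m2: "M ** Y ** M = M" "Y ** M ** Y = Y" "M ** Y = Y ** M"
    using assms unfolding is_group_inverse_def by auto
  have mmx: "M ** (M ** X) = M" using m1 by (metis matrix_mul_assoc)
  have "M ** X = (M ** Y ** M) ** X" using m2 by simp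
  also have "... = Y ** (M ** (M ** X))" using m2 by (metis matrix_mul_assoc)
  also have "... = M ** Y" using mmx m2 by simp
  finally have e: "M ** X = M ** Y" .
  have "X = X ** (M ** X)" using m1 by (metis matrix_mul_assoc)
  also have "... = (M ** X) ** Y" using e m1 by (metis matrix_mul_assoc)
  also have "... = Y" using e m2 by (metis matrix_mul_assoc)
  finally show ?thesis .
qed

lemma group_inv_is:
  assumes "has_group_inverse A" shows "is_group_inverse A (group_inv A)"
proof -
  obtain X where X: "is_group_inverse A X" using assms has_group_inverse_def by blast
  have "\<exists>!X. is_group_inverse A X" using X gi_unique by blast
  thus ?thesis unfolding group_inv_def by (rule theI')
qed

theorem mainTheorem6:
  fixes A B C D :: "real^'n::finite^'n"
  assumes gA: "has_group_inverse A"
      and gC: "has_group_inverse C"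
      and gAC: "has_group_inverse (A ** C)"
      and dA: "has_dggi (A, B)"
      and dC: "has_dggi (C, D)"
      and dAC: "has_dggi (dmult (A, B) (C, D))"
      and fA: "dggi (A, B) = (group_inv A, - (group_inv A ** B ** group_inv A))"
      and fC: "dggi (C, D) = (group_inv C, - (group_inv C ** D ** group_inv C))"
      and fAC: "dggi (dmult (A, B) (C, D)) =
                 (group_inv (A ** C),
                  - (group_inv (A ** C) ** (A ** D + B ** C) ** group_inv (A ** C)))"
      and comm: "A ** C = C ** A"
      and h1: "group_inv C ** B = B ** group_inv C"
      and h2: "group_inv A ** D = D ** group_inv A"
  shows "dggi (dmult (A, B) (C, D)) = dmult (dggi (A, B)) (dggi (C, D))
       \<and> dmult (dggi (A, B)) (dggi (C, D)) = dmult (dggi (C, D)) (dggi (A, B))"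
proof -
  define a where "a = group_inv A"
  define c where "c = group_inv C"
  have ia: "is_group_inverse A a" using gA group_inv_is a_def by blast
  have ic: "is_group_inverse C c" using gC group_inv_is c_def by blast
  have a3: "A ** a ** A = A" "a ** A ** a = a" "A ** a = a ** A"
    using ia unfolding is_group_inverse_def by auto
  have c3: "C ** c ** C = C" "c ** C ** c = c" "C ** c = c ** C"
    using ic unfolding is_group_inverse_def by auto
  have cA: "c ** A = A ** c" using comm_gi[OF ic, of A] comm by simp
  have aC: "a ** C = C ** a" using comm_gi[OF ia, of C] comm by simp
  have ac: "a ** c = c ** a" using comm_gi[OF ic, of a] aC by simp
  have i1: "A ** C ** (a ** c) ** (A ** C) = A ** C"
  proof -
    have "A ** C ** (a ** c) ** (A ** C) = A ** a ** C ** c ** A ** C" using aC by (metis matrix_mul_assoc)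
    also have "... = A ** a ** C ** A ** c ** C" using cA by (metis matrix_mul_assoc)
    also have "... = A ** a ** A ** C ** c ** C" using comm by (metis matrix_mul_assoc)
    also have "... = (A ** a ** A) ** (C ** c ** C)" by (metis matrix_mul_assoc)
    finally show ?thesis using a3 c3 by simp
  qed
  have i2: "a ** c ** (A ** C) ** (a ** c) = a ** c"
  proof -
    have "a ** c ** (A ** C) ** (a ** c) = a ** A ** c ** C ** a ** c" using cA by (metis matrix_mul_assoc)
    also have "... = a ** A ** c ** a ** C ** c" using aC by (metis matrix_mul_assoc)
    also have "... = a ** A ** a ** c ** C ** c" using ac by (metis matrix_mul_assoc)
    also have "... = (a ** A ** a) ** (c ** C ** c)" by (metis matrix_mul_assoc)
    finally show ?thesis using a3 c3 by simp
  qed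
  have i3: "A ** C ** (a ** c) = a ** c ** (A ** C)"
  proof -
    have "A ** C ** (a ** c) = A ** a ** C ** c" using aC by (metis matrix_mul_assoc)
    also have "... = a ** A ** C ** c" using a3 by (metis matrix_mul_assoc)
    also have "... = a ** A ** c ** C" using c3 by (metis matrix_mul_assoc)
    also have "... = a ** c ** A ** C" using cA by (metis matrix_mul_assoc)
    finally show ?thesis by (metis matrix_mul_assoc)
  qed
  have iac: "is_group_inverse (A ** C) (a ** c)"
    using i1 i2 i3 unfolding is_group_inverse_def by simp
  have gac: "group_inv (A ** C) = a ** c"
    using gi_unique[OF group_inv_is[OF gAC] iac] .
  have e1: "a ** c ** A ** D ** a ** c = a ** c ** D ** c"
  proof -
    have "a ** c ** A ** D ** a ** c = a ** A ** c ** D ** a ** c" using cA by (metis matrix_mul_assoc)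
    also have "... = a ** A ** c ** a ** D ** c" using h2 a_def by (metis matrix_mul_assoc)
    also have "... = a ** A ** a ** c ** D ** c" using ac by (metis matrix_mul_assoc)
    also have "... = a ** c ** D ** c" by (simp only: a3(2))
    finally show ?thesis .
  qed
  have e2: "a ** c ** B ** C ** a ** c = a ** B ** a ** c"
  proof -
    have "a ** c ** B ** C ** a ** c = a ** B ** c ** C ** a ** c" using h1 c_def by (metis matrix_mul_assoc)
    also have "... = a ** B ** c ** a ** C ** c" using aC by (metis matrix_mul_assoc)
    also have "... = a ** B ** a ** c ** C ** c" using ac by (metis matrix_mul_assoc)
    also have "... = a ** B ** a ** (c ** C ** c)" by (metis matrix_mul_assoc)
    finally show ?thesis using c3 by simp
  qed
  have e3: "c ** a ** B ** a = a ** B ** a ** c"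
  proof -
    have "c ** a ** B ** a = a ** c ** B ** a" using ac by simp
    also have "... = a ** B ** c ** a" using h1 c_def by (metis matrix_mul_assoc)
    also have "... = a ** B ** a ** c" using ac by (metis matrix_mul_assoc)
    finally show ?thesis .
  qed
  have e4: "c ** D ** c ** a = a ** c ** D ** c"
  proof -
    have "c ** D ** c ** a = c ** D ** a ** c" using ac by (metis matrix_mul_assoc)
    also have "... = c ** a ** D ** c" using h2 a_def by (metis matrix_mul_assoc)
    also have "... = a ** c ** D ** c" using ac by simp
    finally show ?thesis .
  qed
  show ?thesis
    unfolding fA fC fAC gac
    unfolding dmult_def a_def[symmetric] c_def[symmetric]
    using e1 e2 e3 e4
    by (simp add: mm_rneg mm_lneg matrix_add_ldistrib mm_rdistrib matrix_mul_assoc add.commute) (rule ac)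
qed

end
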